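(* Let $1\le p<\infty$, $q=p(p-1)^{-1}$, $\beta\in\mathbb{R}$, let $r\ge2$ be a natural number, and let $\omega$ be a function of the modulus of continuity type. Suppose there is a constant $C$ such that for all integers $n\ge0$, $$\left\{\int_{0}^{\frac{\pi}{r(n+1)}}\left(\frac{\omega(t)}{t\sin^{\beta}\frac{rt}{2}}\right)^{q}dt\right\}^{1/q}\le C(n+1)^{\beta+1/p}\,\omega\!\left(\frac{\pi}{n+1}\right).$$ Then for every $m\in\{0,1,\dots,[r/2]-1\}$ there is a constant $C'$ such that for all $n\ge0$, $$\left\{\int_{\frac{2(m+1)\pi}{r}-\frac{\pi}{r(n+1)}}^{\frac{2(m+1)\pi}{r}}\left(\frac{\omega(t)}{t\left|\sin\frac{rt}{2}\right|^{\beta}}\right)^{q}dt\right\}^{1/q}\le C'(n+1)^{\beta+1/p}\,\omega\!\left(\frac{\pi}{n+1}\right).$$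
   Context: A function of the modulus of continuity type is a nondecreasing continuous function $\omega$ on $[0,2\pi]$ with $\omega(0)=0$ and $\omega(\delta_1+\delta_2)\le\omega(\delta_1)+\omega(\delta_2)$ whenever $0\le\delta_1\le\delta_2\le\delta_1+\delta_2\le2\pi$. $[y]$ is the integer part of $y$. When $p=1$ (so $q=\infty$), $\{\int g^q\}^{1/q}$ is read as the essential supremum of $g$. *)

theory Defs
  imports "HOL-Analysis.Analysis" "HOL-Probability.Essential_Supremum"
begin

definition modulus_type :: "(real \<Rightarrow> real) \<Rightarrow> bool" where
  "modulus_type \<omega> \<longleftrightarrow>
     mono_on {0..2*pi} \<omega> \<and> continuous_on {0..2*pi} \<omega> \<and> \<omega> 0 = 0 \<and>
     (\<forall>d1 d2. 0 \<le> d1 \<and> d1 \<le> d2 \<and> d1 + d2 \<le> 2*pi \<longrightarrow> \<omega> (d1 + d2) \<le> \<omega> d1 + \<omega> d2)"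

definition Lq_norm :: "real \<Rightarrow> real set \<Rightarrow> (real \<Rightarrow> real) \<Rightarrow> ennreal" where
  "Lq_norm p S g =
     (if p = 1 then esssup lborel (\<lambda>t. ennreal (g t) * indicator S t)
      else (let q = p / (p - 1);
                I = (\<integral>\<^sup>+ t. ennreal (g t powr q) * indicator S t \<partial>lborel)
            in if I = \<infinity> then \<infinity> else ennreal (enn2real I powr (1 / q))))"

end

theory Submission
  imports Defs
begin

lemma omega_nonneg: assumes "modulus_type \<omega>" "0 \<le> t" "t \<le> 2*pi" shows "0 \<le> \<omega> t"
proof -
  have "mono_on {0..2*pi} \<omega>" using assms(1) unfolding modulus_type_def by simp
  hence "\<omega> 0 \<le> \<omega> t" using assms mono_onD[of "{0..2*pi}" \<omega> 0 t] by auto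
  thus ?thesis using assms unfolding modulus_type_def by simp
qed

lemma omega_mult: assumes "modulus_type \<omega>" "0 \<le> s" "k \<ge> 1" "real k * s \<le> 2*pi"
  shows "\<omega> (real k * s) \<le> real k * \<omega> s"
  using assms(3,4)
proof (induction k rule: dec_induct)
  case base then show ?case by simp
next
  case (step k)
  have "real k * s \<le> 2*pi" using step(4) assms(2) by (smt (verit) mult_right_mono of_nat_Suc)
  hence IH: "\<omega> (real k * s) \<le> real k * \<omega> s" using step by simp
  have "s \<le> real k * s" using step(1) assms(2) by (simp add: mult_le_cancel_right1)
  hence "\<omega> (s + real k * s) \<le> \<omega> s + \<omega> (real k * s)"
    using assms(1) assms(2) step(4) unfolding modulus_type_def by (auto simp: algebra_simps)
  moreover have "s + real k * s = real (Suc k) * s" by (simp add: algebra_simps)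
  ultimately show ?case using IH by (simp add: algebra_simps)
qed

lemma omega_ratio: assumes "modulus_type \<omega>" "0 < s" "s \<le> t" "t \<le> pi"
  shows "\<omega> t / t \<le> 2 * \<omega> s / s"
proof -
  define k where "k = nat \<lceil>t / s\<rceil>"
  have ts: "t / s \<ge> 1" using assms by simp
  have k1: "real k \<ge> t / s" unfolding k_def by linarith
  have k2: "real k < t / s + 1" unfolding k_def using ts by linarith
  have kge: "k \<ge> 1" using k1 ts by linarith
  have "real k * s \<ge> t" using k1 assms(2) by (simp add: field_simps)
  have "real k * s < t + s" using k2 assms(2) by (simp add: field_simps)
  hence ks: "real k * s \<le> 2*pi" using assms by linarith
  have w0: "0 \<le> \<omega> s" using omega_nonneg assms by auto
  have M: "mono_on {0..2*pi} \<omega>" using assms(1) unfolding modulus_type_def by simp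
  have "\<omega> t \<le> \<omega> (real k * s)"
    using \<open>real k * s \<ge> t\<close> ks assms mono_onD[OF M, of t "real k * s"] by auto
  also have "\<dots> \<le> real k * \<omega> s" using omega_mult assms kge ks by auto
  also have "\<dots> \<le> (t / s + 1) * \<omega> s" using k2 w0 by (intro mult_right_mono) auto
  also have "\<dots> \<le> (2 * t / s) * \<omega> s" using ts w0 by (intro mult_right_mono) auto
  finally have "\<omega> t \<le> (2 * t / s) * \<omega> s" .
  thus ?thesis using assms by (simp add: field_simps)
qed

lemma reflect_AE:
  fixes t0 :: real
  assumes "AE x in lborel. P x"
  shows "AE x in lborel. P (t0 - x)"
proof -
  have eq: "distr lborel borel (\<lambda>x. t0 - x) = lborel"
    using lborel_real_affine[of "-1" t0] by (simp add: density_1)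
  have "AE x in distr lborel borel (\<lambda>x. t0 - x). P x" unfolding eq by (rule assms)
  from AE_distrD[OF _ this] show ?thesis by simp
qed

lemma reflect_nn:
  fixes t0 :: real
  assumes [measurable]: "f \<in> borel_measurable borel"
  shows "(\<integral>\<^sup>+x. f (t0 - x) \<partial>lborel) = (\<integral>\<^sup>+x. f x \<partial>lborel)"
  using nn_integral_real_affine[OF assms, of "-1" t0] by simp

lemma Lq_norm_p:
  assumes "p \<noteq> 1"
  shows "Lq_norm p S g = (if (\<integral>\<^sup>+ t. ennreal (g t powr (p / (p - 1))) * indicator S t \<partial>lborel) = \<infinity> then \<infinity>
     else ennreal (enn2real (\<integral>\<^sup>+ t. ennreal (g t powr (p / (p - 1))) * indicator S t \<partial>lborel) powr (1 / (p / (p - 1)))))"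
  using assms unfolding Lq_norm_def Let_def by simp

lemma key:
  fixes c t0 p :: real
  assumes c: "c > 0" and p: "1 \<le> p"
    and m1[measurable]: "(\<lambda>t. g1 t * indicator S1 t) \<in> borel_measurable borel"
    and m2[measurable]: "(\<lambda>t. g2 t * indicator S2 t) \<in> borel_measurable borel"
    and pt: "\<And>t. t \<in> S2 \<Longrightarrow> 0 \<le> g2 t \<and> g2 t \<le> c * g1 (t0 - t) \<and> t0 - t \<in> S1"
  shows "Lq_norm p S2 g2 \<le> ennreal c * Lq_norm p S1 g1"
proof (cases "p = 1")
  case True
  have e1: "(\<lambda>t. ennreal (g1 t) * indicator S1 t) = (\<lambda>t. ennreal (g1 t * indicator S1 t))"
    by (auto simp: indicator_def fun_eq_iff)
  have e2: "(\<lambda>t. ennreal (g2 t) * indicator S2 t) = (\<lambda>t. ennreal (g2 t * indicator S2 t))"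
    by (auto simp: indicator_def fun_eq_iff)
  define E1 where "E1 = esssup lborel (\<lambda>t. ennreal (g1 t * indicator S1 t))"
  have "AE x in lborel. ennreal (g1 x * indicator S1 x) \<le> E1"
    unfolding E1_def by (rule esssup_AE)
  hence ae: "AE x in lborel. ennreal (g1 (t0 - x) * indicator S1 (t0 - x)) \<le> E1"
    by (rule reflect_AE)
  have "AE x in lborel. ennreal (g2 x * indicator S2 x) \<le> ennreal c * E1"
    using ae
  proof eventually_elim
    case (elim x)
    show ?case
    proof (cases "x \<in> S2")
      case True
      with pt have h: "0 \<le> g2 x" "g2 x \<le> c * g1 (t0 - x)" "t0 - x \<in> S1" by auto
      have "ennreal (g2 x * indicator S2 x) = ennreal (g2 x)" using True by simp
      also have "\<dots> \<le> ennreal (c * g1 (t0 - x))" using h by (intro ennreal_leI) 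
      also have "\<dots> = ennreal c * ennreal (g1 (t0 - x) * indicator S1 (t0 - x))"
        using h c by (simp add: ennreal_mult')
      also have "\<dots> \<le> ennreal c * E1" using elim by (intro mult_left_mono) auto
      finally show ?thesis .
    qed simp
  qed
  hence "esssup lborel (\<lambda>t. ennreal (g2 t * indicator S2 t)) \<le> ennreal c * E1"
    by (intro esssup_I) auto
  thus ?thesis using True unfolding Lq_norm_def e1 e2 E1_def by simp
next
  case False
  define q where "q = p / (p - 1)"
  have q: "q > 0" using False p unfolding q_def by simp
  define F1 where "F1 = (\<lambda>t. ennreal (g1 t powr q) * indicator S1 t)"
  define F2 where "F2 = (\<lambda>t. ennreal (g2 t powr q) * indicator S2 t)"
  have F1e: "F1 = (\<lambda>t. ennreal ((g1 t * indicator S1 t) powr q))"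
    unfolding F1_def by (auto simp: indicator_def fun_eq_iff)
  have F1m[measurable]: "F1 \<in> borel_measurable borel" unfolding F1e by measurable
  define I1 where "I1 = (\<integral>\<^sup>+ t. F1 t \<partial>lborel)"
  define I2 where "I2 = (\<integral>\<^sup>+ t. F2 t \<partial>lborel)"
  have "I2 \<le> (\<integral>\<^sup>+ t. ennreal (c powr q) * F1 (t0 - t) \<partial>lborel)"
    unfolding I2_def
  proof (intro nn_integral_mono)
    fix x
    show "F2 x \<le> ennreal (c powr q) * F1 (t0 - x)"
    proof (cases "x \<in> S2")
      case True
      with pt have h: "0 \<le> g2 x" "g2 x \<le> c * g1 (t0 - x)" "t0 - x \<in> S1" by auto
      have "0 \<le> c * g1 (t0 - x)" using h by linarith
      hence g1: "0 \<le> g1 (t0 - x)" using c by (simp add: zero_le_mult_iff)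
      have "g2 x powr q \<le> (c * g1 (t0 - x)) powr q" using h q by (intro powr_mono2) auto
      also have "\<dots> = c powr q * g1 (t0 - x) powr q" using c g1 by (simp add: powr_mult)
      finally have "ennreal (g2 x powr q) \<le> ennreal (c powr q * g1 (t0 - x) powr q)"
        by (rule ennreal_leI)
      also have "\<dots> = ennreal (c powr q) * ennreal (g1 (t0 - x) powr q)"
        by (rule ennreal_mult') simp
      finally have *: "ennreal (g2 x powr q) \<le> ennreal (c powr q) * ennreal (g1 (t0 - x) powr q)" .
      have "F2 x = ennreal (g2 x powr q)" unfolding F2_def using True by simp
      moreover have "F1 (t0 - x) = ennreal (g1 (t0 - x) powr q)" unfolding F1_def using h by simp
      ultimately show ?thesis using * by simp
    qed (simp add: F2_def)
  qed
  also have "\<dots> = ennreal (c powr q) * I1"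
    unfolding I1_def by (subst nn_integral_cmult) (auto simp: reflect_nn)
  finally have I21: "I2 \<le> ennreal (c powr q) * I1" .
  show ?thesis
  proof (cases "I1 = \<infinity>")
    case True
    have "Lq_norm p S1 g1 = \<infinity>" using Lq_norm_p[OF False, of S1 g1] True
      unfolding q_def[symmetric] F1_def[symmetric] I1_def[symmetric] by simp
    thus ?thesis using c by (simp add: ennreal_mult_top)
  next
    case fin: False
    have I2fin: "I2 \<noteq> \<infinity>" using I21 fin by (auto simp: ennreal_mult_eq_top_iff top_unique)
    have "enn2real I2 \<le> enn2real (ennreal (c powr q) * I1)"
      using I21 fin ennreal_mult_eq_top_iff[of "ennreal (c powr q)" I1]
      by (intro enn2real_mono) (auto simp: less_top[symmetric])
    also have "\<dots> = c powr q * enn2real I1" by (simp add: enn2real_mult)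
    finally have le: "enn2real I2 \<le> c powr q * enn2real I1" .
    have "enn2real I2 powr (1/q) \<le> (c powr q * enn2real I1) powr (1/q)"
      using le q by (intro powr_mono2) auto
    also have "\<dots> = c * enn2real I1 powr (1/q)"
      using c q by (simp add: powr_mult powr_powr)
    finally have "ennreal (enn2real I2 powr (1/q)) \<le> ennreal (c * enn2real I1 powr (1/q))"
      by (rule ennreal_leI)
    also have "\<dots> = ennreal c * ennreal (enn2real I1 powr (1/q))"
      using c by (intro ennreal_mult') simp
    finally have "ennreal (enn2real I2 powr (1/q)) \<le> ennreal c * ennreal (enn2real I1 powr (1/q))" .
    moreover have "Lq_norm p S1 g1 = ennreal (enn2real I1 powr (1/q))"
      using Lq_norm_p[OF False, of S1 g1] fin
      unfolding q_def[symmetric] F1_def[symmetric] I1_def[symmetric] by simp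
    moreover have "Lq_norm p S2 g2 = ennreal (enn2real I2 powr (1/q))"
      using Lq_norm_p[OF False, of S2 g2] I2fin
      unfolding q_def[symmetric] F2_def[symmetric] I2_def[symmetric] by simp
    ultimately show ?thesis by simp
  qed
qed

lemma sin_reflect: "\<bar>sin (real k * pi - x)\<bar> = \<bar>sin x\<bar>"
  by (simp add: sin_diff abs_mult)

lemma meas_omega:
  assumes "modulus_type \<omega>" "S \<subseteq> {0..2*pi}" "closed S"
  shows "(\<lambda>t. indicator S t * \<omega> t) \<in> borel_measurable borel"
proof -
  have "continuous_on S \<omega>" using assms unfolding modulus_type_def
    by (auto intro: continuous_on_subset)
  from borel_measurable_continuous_on_indicator[OF _ this] assms(3)
  show ?thesis by (simp add: borel_closed)
qed

theorem lemma6: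
  fixes p \<beta> :: real and r :: nat and \<omega> :: "real \<Rightarrow> real" and C :: real
  assumes p: "1 \<le> p"
    and r: "r \<ge> 2"
    and \<omega>: "modulus_type \<omega>"
    and hyp: "\<And>n::nat. Lq_norm p {0 .. pi / (real r * (real n + 1))}
                 (\<lambda>t. \<omega> t / (t * sin (real r * t / 2) powr \<beta>))
               \<le> ennreal (C * (real n + 1) powr (\<beta> + 1 / p) * \<omega> (pi / (real n + 1)))"
  shows "\<forall>m::nat. m < r div 2 \<longrightarrow> (\<exists>C'::real. \<forall>n::nat.
           Lq_norm p {2 * (real m + 1) * pi / real r - pi / (real r * (real n + 1))
                      .. 2 * (real m + 1) * pi / real r}
             (\<lambda>t. \<omega> t / (t * \<bar>sin (real r * t / 2)\<bar> powr \<beta>))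
           \<le> ennreal (C' * (real n + 1) powr (\<beta> + 1 / p) * \<omega> (pi / (real n + 1))))"
proof (intro allI impI)
  fix m :: nat assume m: "m < r div 2"
  have rpos: "real r \<ge> 2" using r by simp
  have "2 * (m + 1) \<le> r" using m by presburger
  hence "real (2 * (m + 1)) \<le> real r" by (rule of_nat_mono)
  hence mr: "2 * (real m + 1) \<le> real r" by simp
  define t0 where "t0 = 2 * (real m + 1) * pi / real r"
  have t0le: "t0 \<le> pi" unfolding t0_def using mult_right_mono[OF mr pi_ge_zero] rpos by (simp add: field_simps)
  have t0ge: "t0 \<ge> 2 * pi / real r" unfolding t0_def using rpos by (simp add: field_simps)
  have rt0: "real r * t0 / 2 = real (Suc m) * pi" unfolding t0_def using rpos by (simp add: field_simps)
  show "\<exists>C'::real. \<forall>n::nat.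
           Lq_norm p {2 * (real m + 1) * pi / real r - pi / (real r * (real n + 1))
                      .. 2 * (real m + 1) * pi / real r}
             (\<lambda>t. \<omega> t / (t * \<bar>sin (real r * t / 2)\<bar> powr \<beta>))
           \<le> ennreal (C' * (real n + 1) powr (\<beta> + 1 / p) * \<omega> (pi / (real n + 1)))"
  proof (intro exI allI)
    fix n :: nat
    define a where "a = pi / (real r * (real n + 1))"
    have apos: "a > 0" unfolding a_def using rpos by simp
    have "real r * 1 \<le> real r * (real n + 1)" using rpos by (intro mult_left_mono) auto
    hence ale: "a \<le> pi / real r" unfolding a_def using rpos by (intro divide_left_mono) auto
    have pir: "pi / real r \<le> pi / 2" using rpos by (intro divide_left_mono) auto
    define g1 where "g1 = (\<lambda>t. \<omega> t / (t * sin (real r * t / 2) powr \<beta>))"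
    define g2 where "g2 = (\<lambda>t. \<omega> t / (t * \<bar>sin (real r * t / 2)\<bar> powr \<beta>))"
    define X where "X = C * (real n + 1) powr (\<beta> + 1 / p) * \<omega> (pi / (real n + 1))"
    have "2 * pi / real r = pi / real r + pi / real r" by simp
    hence ta: "t0 - a \<ge> pi / real r" using t0ge ale by linarith
    have pirp: "pi / real r > 0" using rpos by simp
    have m1a[measurable]: "(\<lambda>t. indicator {0..a} t * \<omega> t) \<in> borel_measurable borel"
      using apos ale pir pi_gt_zero by (intro meas_omega[OF \<omega>]) auto
    have m2a[measurable]: "(\<lambda>t. indicator {t0 - a..t0} t * \<omega> t) \<in> borel_measurable borel"
      using ta pirp t0le pi_gt_zero by (intro meas_omega[OF \<omega>]) auto
    have e1: "(\<lambda>t. g1 t * indicator {0..a} t) = 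
        (\<lambda>t. (indicator {0..a} t * \<omega> t) / (t * sin (real r * t / 2) powr \<beta>))"
      unfolding g1_def by (auto simp: indicator_def fun_eq_iff)
    have e2: "(\<lambda>t. g2 t * indicator {t0 - a..t0} t) = 
        (\<lambda>t. (indicator {t0 - a..t0} t * \<omega> t) / (t * \<bar>sin (real r * t / 2)\<bar> powr \<beta>))"
      unfolding g2_def by (auto simp: indicator_def fun_eq_iff)
    have m1: "(\<lambda>t. g1 t * indicator {0..a} t) \<in> borel_measurable borel"
      unfolding e1 by measurable
    have m2: "(\<lambda>t. g2 t * indicator {t0 - a..t0} t) \<in> borel_measurable borel"
      unfolding e2 by measurable
    have pt: "0 \<le> g2 t \<and> g2 t \<le> 2 * g1 (t0 - t) \<and> t0 - t \<in> {0..a}"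
      if t: "t \<in> {t0 - a..t0}" for t
    proof -
      define s where "s = t0 - t"
      have s: "0 \<le> s" "s \<le> a" using t unfolding s_def by auto
      have tpos: "t > 0" using t ta pirp by auto
      have st: "s \<le> t" using s t ta ale by auto
      have x: "0 \<le> real r * s / 2" using s rpos by simp
      have "real r * s / 2 \<le> real r * (pi / real r) / 2" using s ale rpos
        by (intro divide_right_mono mult_left_mono) auto
      hence "real r * s / 2 \<le> pi / 2" using rpos by simp
      hence x2: "real r * s / 2 \<le> pi" using pi_gt_zero by linarith
      have "real r * s / 2 = real r * t0 / 2 - real r * t / 2"
        unfolding s_def by (simp add: right_diff_distrib diff_divide_distrib)
      hence e: "real r * t / 2 = real (Suc m) * pi - real r * s / 2"
        using rt0 by linarith
      have "\<bar>sin (real r * t / 2)\<bar> = \<bar>sin (real r * s / 2)\<bar>"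
        unfolding e by (rule sin_reflect)
      hence sn: "\<bar>sin (real r * t / 2)\<bar> = sin (real r * s / 2)"
        using sin_ge_zero[OF x x2] by simp
      define P where "P = sin (real r * s / 2) powr \<beta>"
      have P0: "P \<ge> 0" unfolding P_def by simp
      have g2e: "g2 t = \<omega> t / (t * P)" unfolding g2_def P_def sn ..
      have g1e: "g1 s = \<omega> s / (s * P)" unfolding g1_def P_def ..
      have wt: "0 \<le> \<omega> t" using omega_nonneg[OF \<omega>] tpos t t0le by auto
      have g2n: "0 \<le> g2 t" unfolding g2e using wt tpos P0 by simp
      have "g2 t \<le> 2 * g1 s"
      proof (cases "s = 0 \<or> P = 0")
        case True
        hence "P = 0" unfolding P_def by auto
        thus ?thesis unfolding g1e g2e by simp
      next
        case False
        hence sp: "s > 0" and Pp: "P > 0" using s P0 by auto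
        have "\<omega> t / t \<le> 2 * \<omega> s / s" using omega_ratio[OF \<omega> sp st] t t0le by auto
        hence "\<omega> t / t / P \<le> 2 * \<omega> s / s / P" using Pp by (intro divide_right_mono) auto
        thus ?thesis unfolding g1e g2e by (simp only: divide_divide_eq_left times_divide_eq_right)
      qed
      thus ?thesis using g2n s unfolding s_def by auto
    qed
    have "Lq_norm p {t0 - a..t0} g2 \<le> ennreal 2 * Lq_norm p {0..a} g1"
      by (rule key[OF _ p m1 m2 pt]) auto
    also have "\<dots> \<le> ennreal 2 * ennreal X"
      using hyp[of n] unfolding g1_def a_def X_def by (intro mult_left_mono) auto
    also have "\<dots> = ennreal ((2 * C) * (real n + 1) powr (\<beta> + 1 / p) * \<omega> (pi / (real n + 1)))"
      unfolding X_def by (subst ennreal_mult'[symmetric]) (auto simp: algebra_simps)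
    finally show "Lq_norm p {2 * (real m + 1) * pi / real r - pi / (real r * (real n + 1))
                      .. 2 * (real m + 1) * pi / real r}
             (\<lambda>t. \<omega> t / (t * \<bar>sin (real r * t / 2)\<bar> powr \<beta>))
           \<le> ennreal ((2 * C) * (real n + 1) powr (\<beta> + 1 / p) * \<omega> (pi / (real n + 1)))"
      unfolding t0_def a_def g2_def .
  qed
qed

end
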